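(* Let $m\ge 2$ and let $K\ne\Delta_{[m]}$ be a simplicial complex on $[m]$. Then for every prime $p$, $$s(\mathrm{Bier}(K))=s_p(\mathrm{Bier}(K))=f_0(K)-f_{m-2}(K)+1.$$
   Context: A simplicial complex $K$ on $[m]=\{1,\dots,m\}$ is a nonempty family of subsets of $[m]$ closed under taking subsets; $V(K)=\{i:\{i\}\in K\}$, and $f_i(K)$ is the number of faces of $K$ of cardinality $i+1$ (so $f_0(K)=|V(K)|$). $\Delta_{[m]}=2^{[m]}$. Let $[m']=\{1',\dots,m'\}$ be a disjoint copy of $[m]$, $I'=\{i':i\in I\}$. For $K\ne\Delta_{[m]}$ the Alexander dual $K^\vee$ is the complex on $[m']$ with $J'\in K^\vee$ iff $[m]\setminus J\notin K$. The Bier sphere $\mathrm{Bier}(K)$ is the complex on $[m]\sqcup[m']$ with faces $I\sqcup J'$, $I\in K$, $J'\in K^\vee$, $I\cap J=\varnothing$. For a simplicial complex $L$ with $n=|V(L)|$ vertices, the complex Buchstaber number $s(L)$ is the largest integer $r$ such that there is a map $\Lambda\colon V(L)\to\mathbb Z^{n-r}$ sending the vertex set of every face of $L$ injectively onto a subset of some basis of the lattice $\mathbb Z^{n-r}$. For a prime $p$, the mod $p$ Buchstaber number $s_p(L)$ is the largest $r$ such that there is a map $\Lambda_p\colon V(L)\to\mathbb Z_p^{n-r}$ sending the vertex set of every face injectively onto a linearly independent set over the field $\mathbb Z_p$. *)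

theory Defs
  imports "HOL-Computational_Algebra.Primes"
begin

text \<open>Simplicial complex on [m] = {1..m} (ghost vertices allowed).\<close>
definition simplicial_complex_on :: "nat \<Rightarrow> nat set set \<Rightarrow> bool" where
  "simplicial_complex_on m K \<longleftrightarrow> K \<noteq> {} \<and> (\<forall>F\<in>K. F \<subseteq> {1..m}) \<and>
     (\<forall>F\<in>K. \<forall>G. G \<subseteq> F \<longrightarrow> G \<in> K)"

definition vertices :: "'v set set \<Rightarrow> 'v set" where
  "vertices L = {v. {v} \<in> L}"

definition fvec :: "nat set set \<Rightarrow> nat \<Rightarrow> nat" where
  "fvec K i = card {F\<in>K. card F = i + 1}"

text \<open>Alexander dual, with J' represented by its index set J \<subseteq> [m].\<close>
definition alexander_dual :: "nat \<Rightarrow> nat set set \<Rightarrow> nat set set" where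
  "alexander_dual m K = {J. J \<subseteq> {1..m} \<and> {1..m} - J \<notin> K}"

text \<open>Bier sphere on [m] \<squnion> [m']; vertex i is Inl i, vertex i' is Inr i.\<close>
definition bier :: "nat \<Rightarrow> nat set set \<Rightarrow> (nat + nat) set set" where
  "bier m K = {Inl ` I \<union> Inr ` J | I J. I \<in> K \<and> J \<in> alexander_dual m K \<and> I \<inter> J = {}}"

definition Zvec :: "nat \<Rightarrow> (nat \<Rightarrow> int) set" where
  "Zvec k = {v. \<forall>i\<ge>k. v i = 0}"

definition Zbasis :: "nat \<Rightarrow> (nat \<Rightarrow> int) set \<Rightarrow> bool" where
  "Zbasis k B \<longleftrightarrow> finite B \<and> B \<subseteq> Zvec k \<and>
     (\<forall>v\<in>Zvec k. \<exists>c. v = (\<lambda>i. \<Sum>b\<in>B. c b * b i)) \<and>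
     (\<forall>c. (\<lambda>i. \<Sum>b\<in>B. c b * b i) = (\<lambda>i. 0) \<longrightarrow> (\<forall>b\<in>B. c b = 0))"

definition Zpvec :: "nat \<Rightarrow> nat \<Rightarrow> (nat \<Rightarrow> int) set" where
  "Zpvec p k = {v. (\<forall>i. 0 \<le> v i \<and> v i < int p) \<and> (\<forall>i\<ge>k. v i = 0)}"

definition lin_indep_mod :: "nat \<Rightarrow> (nat \<Rightarrow> int) set \<Rightarrow> bool" where
  "lin_indep_mod p S \<longleftrightarrow> finite S \<and>
     (\<forall>c. (\<forall>i. (\<Sum>b\<in>S. c b * b i) mod int p = 0) \<longrightarrow> (\<forall>b\<in>S. c b mod int p = 0))"

definition buchstaber :: "'v set set \<Rightarrow> nat" where
  "buchstaber L = (GREATEST r. r \<le> card (vertices L) \<and>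
     (\<exists>\<Lambda> :: 'v \<Rightarrow> (nat \<Rightarrow> int). \<forall>\<sigma>\<in>L. inj_on \<Lambda> \<sigma> \<and>
        (\<exists>B. Zbasis (card (vertices L) - r) B \<and> \<Lambda> ` \<sigma> \<subseteq> B)))"

definition buchstaber_mod :: "nat \<Rightarrow> 'v set set \<Rightarrow> nat" where
  "buchstaber_mod p L = (GREATEST r. r \<le> card (vertices L) \<and>
     (\<exists>\<Lambda> :: 'v \<Rightarrow> (nat \<Rightarrow> int). \<forall>\<sigma>\<in>L. inj_on \<Lambda> \<sigma> \<and>
        \<Lambda> ` \<sigma> \<subseteq> Zpvec p (card (vertices L) - r) \<and> lin_indep_mod p (\<Lambda> ` \<sigma>)))"

end

theory Submission imports Defs "HOL-Library.FuncSet" begin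

definition uvec :: "nat \<Rightarrow> nat \<Rightarrow> nat \<Rightarrow> int" where
  "uvec k i = (\<lambda>t. if i < k then (if t = i then 1 else 0) else (if t < k then -1 else 0))"

lemma uvec_inj: "inj_on (uvec k) {0..k}"
proof (rule inj_onI)
  fix i j assume i: "i \<in> {0..k}" and j: "j \<in> {0..k}" and e: "uvec k i = uvec k j"
  show "i = j"
  proof (rule ccontr)
    assume ne: "i \<noteq> j"
    show False
    proof (cases "i < k")
      case True
      then have "uvec k i i = 1" by (simp add: uvec_def)
      moreover have "uvec k j i \<noteq> 1" using True ne j by (auto simp: uvec_def)
      ultimately show False using e by simp
    next
      case False
      then have "j < k" using i j ne by auto
      then have "uvec k j j = 1" by (simp add: uvec_def)
      moreover have "uvec k i j \<noteq> 1" using \<open>j<k\<close> ne i by (auto simp: uvec_def)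
      ultimately show False using e by simp
    qed
  qed
qed

lemma sum_u: "(\<Sum>i\<in>{0..k}. d i * uvec k i t) = (if t < k then d t - d k else 0)"
proof -
  have "{0..k} = insert k {0..<k}" by auto
  then have "(\<Sum>i\<in>{0..k}. d i * uvec k i t) = d k * uvec k k t + (\<Sum>i\<in>{0..<k}. d i * uvec k i t)"
    by simp
  also have "(\<Sum>i\<in>{0..<k}. d i * uvec k i t) = (\<Sum>i\<in>{0..<k}. if t = i then d i else 0)"
    by (rule sum.cong) (auto simp: uvec_def)
  also have "\<dots> = (if t < k then d t else 0)"
    by (simp add: sum.delta)
  finally show ?thesis by (auto simp: uvec_def)
qed

lemma uvec_Zvec: "uvec k i \<in> Zvec k"
  by (auto simp: uvec_def Zvec_def)

lemma uvec_basis: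
  assumes "j \<le> k"
  shows "Zbasis k (uvec k ` ({0..k} - {j}))"
proof -
  let ?A = "{0..k} - {j}"
  have injA: "inj_on (uvec k) ?A" using uvec_inj by (rule inj_on_subset) auto
  have sumB: "(\<Sum>b\<in>uvec k ` ?A. c b * b t) = (\<Sum>i\<in>?A. c (uvec k i) * uvec k i t)" for c t
    by (simp add: sum.reindex[OF injA])
  have span: "\<exists>c. v = (\<lambda>t. \<Sum>b\<in>uvec k ` ?A. c b * b t)" if v: "v \<in> Zvec k" for v
  proof -
    define c where "c = (\<lambda>b. v (inv_into {0..k} (uvec k) b) - v j)"
    have cu: "c (uvec k i) = v i - v j" if "i \<in> {0..k}" for i
      using that uvec_inj by (simp add: c_def)
    have vk: "v k = 0" using v by (simp add: Zvec_def)
    have "(\<Sum>b\<in>uvec k ` ?A. c b * b t) = v t" for t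
    proof -
      have "(\<Sum>b\<in>uvec k ` ?A. c b * b t) = (\<Sum>i\<in>?A. (v i - v j) * uvec k i t)"
        unfolding sumB by (rule sum.cong) (auto simp: cu)
      also have "\<dots> = (\<Sum>i\<in>{0..k}. (v i - v j) * uvec k i t)"
      proof -
        have "{0..k} = insert j ?A" using assms by auto
        then have "(\<Sum>i\<in>{0..k}. (v i - v j) * uvec k i t) = (v j - v j) * uvec k j t + (\<Sum>i\<in>?A. (v i - v j) * uvec k i t)"
          by (metis (no_types, lifting) Diff_iff finite_Diff finite_atLeastAtMost insertI1 sum.insert)
        then show ?thesis by simp
      qed
      also have "\<dots> = v t" using vk v by (auto simp: sum_u Zvec_def)
      finally show ?thesis .
    qed
    then show ?thesis by (intro exI[of _ c]) auto
  qed
  have indep: "\<forall>b\<in>uvec k ` ?A. c b = 0" if z: "(\<lambda>t. \<Sum>b\<in>uvec k ` ?A. c b * b t) = (\<lambda>t. 0)" for c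
  proof -
    define d where "d = (\<lambda>i. if i = j then 0 else c (uvec k i))"
    have z2: "(\<Sum>i\<in>{0..k}. d i * uvec k i t) = 0" for t
    proof -
      have "{0..k} = insert j ?A" using assms by auto
      then have "(\<Sum>i\<in>{0..k}. d i * uvec k i t) = d j * uvec k j t + (\<Sum>i\<in>?A. d i * uvec k i t)"
        by (metis (no_types, lifting) Diff_iff finite_Diff finite_atLeastAtMost insertI1 sum.insert)
      also have "(\<Sum>i\<in>?A. d i * uvec k i t) = (\<Sum>b\<in>uvec k ` ?A. c b * b t)"
        unfolding sumB by (rule sum.cong) (auto simp: d_def)
      finally show ?thesis using fun_cong[OF z, of t] by (simp add: d_def)
    qed
    have eq: "d i = d k" if "i \<le> k" for i
    proof (cases "i < k")
      case True
      then show ?thesis using z2[of i] by (simp add: sum_u)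
    qed (use that in auto)
    have "d k = 0" using eq[OF assms] by (simp add: d_def)
    then have d0: "d i = 0" if "i \<le> k" for i using eq[OF that] by linarith
    show ?thesis
    proof
      fix b assume "b \<in> uvec k ` ?A"
      then obtain i where i: "i \<in> ?A" "b = uvec k i" by blast
      then show "c b = 0" using d0[of i] by (auto simp: d_def)
    qed
  qed
  show ?thesis unfolding Zbasis_def
    using span indep uvec_Zvec by auto
qed

lemma zbasis_mod:
  assumes B: "Zbasis k B" and c: "\<forall>i. (\<Sum>b\<in>B. c b * b i) mod int p = 0" and b: "b \<in> B"
  shows "c b mod int p = 0"
proof -
  define w where "w = (\<lambda>i. (\<Sum>b\<in>B. c b * b i) div int p)"
  have Bz: "B \<subseteq> Zvec k" and fin: "finite B" using B by (auto simp: Zbasis_def)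
  have "w \<in> Zvec k"
  proof -
    have "(\<Sum>b\<in>B. c b * b i) = 0" if "i \<ge> k" for i
      using Bz that by (intro sum.neutral) (auto simp: Zvec_def)
    then show ?thesis by (auto simp: Zvec_def w_def)
  qed
  then obtain d where d: "w = (\<lambda>i. \<Sum>b\<in>B. d b * b i)" using B by (auto simp: Zbasis_def)
  have pw: "(\<Sum>b\<in>B. c b * b i) = int p * w i" for i
    using c unfolding w_def by (metis dvd_mult_div_cancel mod_0_imp_dvd)
  have ind: "\<And>c'. (\<lambda>i. \<Sum>b\<in>B. c' b * b i) = (\<lambda>i. 0) \<Longrightarrow> \<forall>b\<in>B. c' b = 0"
    using B by (simp add: Zbasis_def)
  have "(\<lambda>i. \<Sum>b\<in>B. (c b - int p * d b) * b i) = (\<lambda>i. 0)"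
  proof
    fix i
    have "(\<Sum>b\<in>B. (c b - int p * d b) * b i) = (\<Sum>b\<in>B. c b * b i) - int p * (\<Sum>b\<in>B. d b * b i)"
      by (simp add: algebra_simps sum_subtractf sum_distrib_left)
    also have "\<dots> = 0" using pw[of i] d by simp
    finally show "(\<Sum>b\<in>B. (c b - int p * d b) * b i) = 0" .
  qed
  then have "c b - int p * d b = 0" using ind[of "\<lambda>b. c b - int p * d b"] b by simp
  then show ?thesis by simp
qed

lemma zbasis_red_inj:
  assumes B: "Zbasis k B" and p: "p > 1"
  shows "inj_on (\<lambda>x i. x i mod int p) B"
proof (rule inj_onI)
  fix x y assume x: "x \<in> B" and y: "y \<in> B" and e: "(\<lambda>i. x i mod int p) = (\<lambda>i. y i mod int p)"
  show "x = y"
  proof (rule ccontr)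
    assume ne: "x \<noteq> y"
    define c where "c = (\<lambda>b. if b = x then 1 else if b = y then -1 else (0::int))"
    have fin: "finite B" using B by (auto simp: Zbasis_def)
    have "(\<Sum>b\<in>B. c b * b i) = x i - y i" for i
    proof -
      have "(\<Sum>b\<in>B. c b * b i) = (\<Sum>b\<in>B. (if b = x then x i else 0) + (if b = y then - y i else 0))"
        by (rule sum.cong) (auto simp: c_def ne)
      also have "\<dots> = x i - y i" using x y fin by (simp add: sum.distrib)
      finally show ?thesis .
    qed
    moreover have "(x i - y i) mod int p = 0" for i
      using fun_cong[OF e, of i] by (simp add: mod_eq_dvd_iff)
    ultimately have "c x mod int p = 0" using zbasis_mod[OF B _ x, of c p] by simp
    then show False using p by (simp add: c_def)
  qed
qed

lemma indep_card:
  assumes p: "p > 1" and S: "S \<subseteq> Zpvec p k" and li: "lin_indep_mod p S"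
  shows "card S \<le> k"
proof -
  have fin: "finite S" using li by (simp add: lin_indep_mod_def)
  define F where "F = (\<lambda>f. restrict (\<lambda>i. (\<Sum>b\<in>S. f b * b i) mod int p) {..<k})"
  have inj: "inj_on F (S \<rightarrow>\<^sub>E {0..<int p})"
  proof (rule inj_onI)
    fix f g assume f: "f \<in> S \<rightarrow>\<^sub>E {0..<int p}" and g: "g \<in> S \<rightarrow>\<^sub>E {0..<int p}" and e: "F f = F g"
    have z: "(\<Sum>b\<in>S. (f b - g b) * b i) mod int p = 0" for i
    proof (cases "i < k")
      case True
      have "(\<Sum>b\<in>S. f b * b i) mod int p = (\<Sum>b\<in>S. g b * b i) mod int p"
        using fun_cong[OF e, of i] True by (simp add: F_def)
      then have "int p dvd (\<Sum>b\<in>S. f b * b i) - (\<Sum>b\<in>S. g b * b i)"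
        by (simp only: mod_eq_dvd_iff)
      moreover have "(\<Sum>b\<in>S. f b * b i) - (\<Sum>b\<in>S. g b * b i) = (\<Sum>b\<in>S. (f b - g b) * b i)"
        by (simp add: sum_subtractf left_diff_distrib)
      ultimately show ?thesis by simp
    next
      case False
      have "(\<Sum>b\<in>S. (f b - g b) * b i) = 0"
        using S False by (intro sum.neutral) (auto simp: Zpvec_def)
      then show ?thesis by simp
    qed
    have ind: "\<And>c'. (\<forall>i. (\<Sum>b\<in>S. c' b * b i) mod int p = 0) \<Longrightarrow> (\<forall>b\<in>S. c' b mod int p = 0)"
      using li unfolding lin_indep_mod_def by blast
    have "\<forall>b\<in>S. (f b - g b) mod int p = 0"
      using ind[of "\<lambda>b. f b - g b"] z by simp
    then have "\<forall>b\<in>S. f b = g b"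
    proof (intro ballI)
      fix b assume "\<forall>b\<in>S. (f b - g b) mod int p = 0" "b \<in> S"
      then have m: "(f b - g b) mod int p = 0" by blast
      have fb: "f b \<in> {0..<int p}" by (rule PiE_mem[OF f \<open>b \<in> S\<close>])
      have gb: "g b \<in> {0..<int p}" by (rule PiE_mem[OF g \<open>b \<in> S\<close>])
      have "f b mod int p = f b" using fb by (intro mod_pos_pos_trivial) simp_all
      moreover have "g b mod int p = g b" using gb by (intro mod_pos_pos_trivial) simp_all
      moreover have "f b mod int p = g b mod int p"
        by (rule mod_eq_dvd_iff[THEN iffD2], rule mod_0_imp_dvd, rule m)
      ultimately show "f b = g b" by linarith
    qed
    then show "f = g" using f g by (intro PiE_ext[OF f g]) blast
  qed
  have im: "F ` (S \<rightarrow>\<^sub>E {0..<int p}) \<subseteq> {..<k} \<rightarrow>\<^sub>E {0..<int p}"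
  proof
    fix x assume "x \<in> F ` (S \<rightarrow>\<^sub>E {0..<int p})"
    then obtain f where "x = F f" by blast
    moreover have "(\<Sum>b\<in>S. f b * b i) mod int p \<in> {0..<int p}" for i using p by simp
    ultimately show "x \<in> {..<k} \<rightarrow>\<^sub>E {0..<int p}" unfolding F_def by (simp add: restrict_PiE_iff)
  qed
  have c1: "card (S \<rightarrow>\<^sub>E {0..<int p}) \<le> card ({..<k} \<rightarrow>\<^sub>E {0..<int p})"
    by (rule card_inj_on_le[OF inj im]) (simp add: finite_PiE)
  have c2: "card (S \<rightarrow>\<^sub>E {0..<int p}) = p ^ card S" using fin by (simp add: card_PiE)
  have c3: "card ({..<k} \<rightarrow>\<^sub>E {0..<int p}) = p ^ k" by (simp add: card_PiE)
  have "p ^ card S \<le> p ^ k" using c1 c2 c3 by simp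
  then show ?thesis using p power_le_imp_le_exp by blast
qed


lemma bier_mem: "\<sigma> \<in> bier m K \<longleftrightarrow> (\<exists>I J. \<sigma> = Inl ` I \<union> Inr ` J \<and> I \<in> K \<and> J \<in> alexander_dual m K \<and> I \<inter> J = {})"
  unfolding bier_def by blast

locale SC =
  fixes m :: nat and K :: "nat set set"
  assumes m2: "m \<ge> 2" and sc: "simplicial_complex_on m K" and ne: "K \<noteq> Pow {1..m}"
begin

lemma sub: "F \<in> K \<Longrightarrow> F \<subseteq> {1..m}" using sc by (auto simp: simplicial_complex_on_def)
lemma down: "F \<in> K \<Longrightarrow> G \<subseteq> F \<Longrightarrow> G \<in> K" using sc by (auto simp: simplicial_complex_on_def)
lemma empty_in: "{} \<in> K"
proof -
  obtain F where "F \<in> K" using sc by (auto simp: simplicial_complex_on_def)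
  then show ?thesis using down by blast
qed
lemma full_notin: "{1..m} \<notin> K"
proof
  assume "{1..m} \<in> K"
  then have "Pow {1..m} \<subseteq> K" using down by blast
  moreover have "K \<subseteq> Pow {1..m}" using sub by blast
  ultimately show False using ne by blast
qed
lemma finK: "finite K"
  using sub by (intro finite_subset[of K "Pow {1..m}"]) auto

lemma empty_dual: "{} \<in> alexander_dual m K"
  using full_notin by (simp add: alexander_dual_def)

lemma proper:
  assumes "I \<in> K" "J \<in> alexander_dual m K" "I \<inter> J = {}"
  shows "\<exists>j\<in>{1..m}. j \<notin> I \<and> j \<notin> J"
proof (rule ccontr)
  assume "\<not> ?thesis"
  then have "I = {1..m} - J" using assms sub[OF assms(1)] by auto
  then show False using assms(2) assms(1) by (simp add: alexander_dual_def)
qed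

definition V0 where "V0 = {i. {i} \<in> K}"
definition V1 where "V1 = {i\<in>{1..m}. {1..m} - {i} \<notin> K}"

lemma V0_sub: "V0 \<subseteq> {1..m}" using sub by (auto simp: V0_def)

lemma face_sub: "\<sigma> \<in> bier m K \<Longrightarrow> \<sigma> \<subseteq> Inl ` V0 \<union> Inr ` V1"
proof -
  assume "\<sigma> \<in> bier m K"
  then obtain I J where s: "\<sigma> = Inl ` I \<union> Inr ` J" "I \<in> K" "J \<in> alexander_dual m K" "I \<inter> J = {}"
    by (auto simp: bier_mem)
  have "I \<subseteq> V0" using s(2) down by (auto simp: V0_def)
  moreover have "J \<subseteq> V1"
  proof
    fix j assume j: "j \<in> J"
    have J: "J \<subseteq> {1..m}" "{1..m} - J \<notin> K" using s(3) by (auto simp: alexander_dual_def)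
    have "{1..m} - {j} \<notin> K"
    proof
      assume "{1..m} - {j} \<in> K"
      then have "{1..m} - J \<in> K" using down j by blast
      then show False using J by blast
    qed
    then show "j \<in> V1" using J j by (auto simp: V1_def)
  qed
  ultimately show ?thesis using s by auto
qed

lemma vert: "vertices (bier m K) = Inl ` V0 \<union> Inr ` V1"
proof
  show "vertices (bier m K) \<subseteq> Inl ` V0 \<union> Inr ` V1"
    using face_sub by (auto simp: vertices_def)
next
  show "Inl ` V0 \<union> Inr ` V1 \<subseteq> vertices (bier m K)"
  proof
    fix v assume "v \<in> Inl ` V0 \<union> Inr ` V1"
    then consider i where "v = Inl i" "i \<in> V0" | i where "v = Inr i" "i \<in> V1" by blast
    then show "v \<in> vertices (bier m K)"
    proof cases
      case 1
      have "{v} = Inl ` {i} \<union> Inr ` {}" using 1 by simp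
      then have "{v} \<in> bier m K" unfolding bier_mem using 1 empty_dual by (auto simp: V0_def)
      then show ?thesis by (simp add: vertices_def)
    next
      case 2
      have "{v} = Inl ` {} \<union> Inr ` {i}" using 2 by simp
      moreover have "{i} \<in> alexander_dual m K" using 2 by (auto simp: V1_def alexander_dual_def)
      ultimately have "{v} \<in> bier m K" unfolding bier_mem using empty_in by blast
      then show ?thesis by (simp add: vertices_def)
    qed
  qed
qed

lemma finV: "finite V0" "finite V1"
  using V0_sub finite_subset by (auto simp: V1_def)

lemma card_vert: "card (vertices (bier m K)) = card V0 + card V1"
  unfolding vert
  by (subst card_Un_disjoint) (auto simp: finV card_image)

lemma fin_vert: "finite (vertices (bier m K))"
  unfolding vert using finV by simp

lemma facet: "\<exists>\<sigma>\<in>bier m K. card \<sigma> = m - 1"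
proof -
  define n0 where "n0 = Max (card ` K)"
  have "n0 \<in> card ` K" unfolding n0_def using finK empty_in by (intro Max_in) auto
  then obtain I where I: "I \<in> K" "card I = n0" by auto
  have mx: "card F \<le> card I" if "F \<in> K" for F
    using that finK I(2) unfolding n0_def by (metis Max_ge finite_imageI imageI)
  have "I \<noteq> {1..m}" using I full_notin by auto
  then obtain j where j: "j \<in> {1..m}" "j \<notin> I" using sub[OF I(1)] by blast
  have finI: "finite I" using sub[OF I(1)] finite_subset by blast
  have "insert j I \<notin> K"
  proof
    assume "insert j I \<in> K"
    then have "card (insert j I) \<le> card I" using mx by blast
    then show False using j finI by simp
  qed
  define J where "J = {1..m} - insert j I"
  have ins: "insert j I \<subseteq> {1..m}" using j sub[OF I(1)] by auto
  have "{1..m} - J = insert j I" using ins by (auto simp: J_def)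
  then have Jd: "J \<in> alexander_dual m K" using \<open>insert j I \<notin> K\<close> by (auto simp: alexander_dual_def J_def)
  have dis: "I \<inter> J = {}" by (auto simp: J_def)
  define \<sigma> where "\<sigma> = Inl ` I \<union> Inr ` J"
  have "\<sigma> \<in> bier m K" unfolding bier_mem \<sigma>_def using I(1) Jd dis by blast
  moreover have "card \<sigma> = card I + card J"
    unfolding \<sigma>_def using finI by (subst card_Un_disjoint) (auto simp: J_def card_image)
  moreover have "card J = m - card (insert j I)"
    unfolding J_def using card_Diff_subset[OF finite_subset[OF ins] ins] by simp
  moreover have "card (insert j I) = card I + 1" using j finI by simp
  moreover have "card (insert j I) \<le> m" using card_mono[OF _ ins] by simp
  ultimately show ?thesis by (intro bexI[of _ \<sigma>]) auto
qed

lemma card_face: "\<sigma> \<in> bier m K \<Longrightarrow> card \<sigma> \<le> card (vertices (bier m K))"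
  using face_sub vert fin_vert by (metis card_mono)

lemma n_ge: "m - 1 \<le> card (vertices (bier m K))"
  using facet card_face by fastforce

definition W where "W = {i\<in>{1..m}. {1..m} - {i} \<in> K}"

lemma fvec0: "fvec K 0 = card V0"
proof -
  have "{F\<in>K. card F = 0 + 1} = (\<lambda>i. {i}) ` V0"
    by (auto simp: V0_def card_1_singleton_iff)
  then show ?thesis unfolding fvec_def by (simp add: card_image)
qed

lemma fvec_top: "fvec K (m - 2) = card W"
proof -
  have e: "m - 2 + 1 = m - 1" using m2 by simp
  have "{F\<in>K. card F = m - 1} = (\<lambda>i. {1..m} - {i}) ` W"
  proof
    show "{F\<in>K. card F = m - 1} \<subseteq> (\<lambda>i. {1..m} - {i}) ` W"
    proof
      fix F assume F: "F \<in> {F\<in>K. card F = m - 1}"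
      then have Fs: "F \<subseteq> {1..m}" "card F = m - 1" "F \<in> K" using sub by auto
      have "F \<noteq> {1..m}" using Fs m2 by auto
      then obtain i where i: "i \<in> {1..m}" "i \<notin> F" using Fs by blast
      have "F \<subseteq> {1..m} - {i}" using Fs i by auto
      moreover have "card ({1..m} - {i}) = m - 1" using i by simp
      ultimately have "F = {1..m} - {i}" using Fs by (intro card_subset_eq) auto
      then show "F \<in> (\<lambda>i. {1..m} - {i}) ` W" using i Fs by (auto simp: W_def)
    qed
  next
    show "(\<lambda>i. {1..m} - {i}) ` W \<subseteq> {F\<in>K. card F = m - 1}"
      by (auto simp: W_def)
  qed
  moreover have "inj_on (\<lambda>i. {1..m} - {i}) W"
  proof (rule inj_onI)
    fix x y assume x: "x \<in> W" and y: "y \<in> W" and e: "{1..m} - {x} = {1..m} - {y}"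
    show "x = y"
    proof (rule ccontr)
      assume "x \<noteq> y"
      moreover have "x \<in> {1..m}" using x by (simp add: W_def)
      ultimately have "x \<in> {1..m} - {y}" by blast
      then have "x \<in> {1..m} - {x}" using e by simp
      then show False by blast
    qed
  qed
  ultimately show ?thesis unfolding fvec_def e by (simp add: card_image)
qed

lemma card_V1: "card V1 = m - card W"
proof -
  have "V1 = {1..m} - W" by (auto simp: V1_def W_def)
  moreover have "W \<subseteq> {1..m}" by (auto simp: W_def)
  ultimately show ?thesis using card_Diff_subset[of W "{1..m}"] finite_subset[of W "{1..m}"] by simp
qed

lemma count: "int (card (vertices (bier m K)) - (m - 1)) = int (fvec K 0) - int (fvec K (m - 2)) + 1"
proof -
  have "card W \<le> card {1..m}" by (rule card_mono) (auto simp: W_def)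
  then have cW: "card W \<le> m" by simp
  define n where "n = card (vertices (bier m K))"
  define f0 where "f0 = fvec K 0"
  define f2 where "f2 = fvec K (m - 2)"
  have a: "n = f0 + (m - f2)" using card_vert card_V1 fvec0 fvec_top unfolding n_def f0_def f2_def by simp
  have b: "f2 \<le> m" using cW fvec_top unfolding f2_def by simp
  have c: "m - 1 \<le> n" using n_ge unfolding n_def .
  have a': "n + f2 = f0 + m" using a b by simp
  then have ia: "int n + int f2 = int f0 + int m" by (metis of_nat_add)
  have ib: "int (n - (m - 1)) = int n - int (m - 1)" using c by (rule of_nat_diff)
  have ic: "int (m - 1) = int m - 1" using m2 by simp
  have "int (n - (m - 1)) = int f0 - int f2 + 1" using ia ib ic by linarith
  then show ?thesis by (simp add: n_def f0_def f2_def)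
qed

lemma PZ: "\<exists>\<Lambda>. \<forall>\<sigma>\<in>bier m K. inj_on \<Lambda> \<sigma> \<and> (\<exists>B. Zbasis (m - 1) B \<and> \<Lambda> ` \<sigma> \<subseteq> B)"
proof -
  define g :: "nat + nat \<Rightarrow> nat" where "g = case_sum (\<lambda>i. i - 1) (\<lambda>i. i - 1)"
  define \<Lambda> where "\<Lambda> = (\<lambda>v. uvec (m - 1) (g v))"
  have "inj_on \<Lambda> \<sigma> \<and> (\<exists>B. Zbasis (m - 1) B \<and> \<Lambda> ` \<sigma> \<subseteq> B)" if sig: "\<sigma> \<in> bier m K" for \<sigma>
  proof -
    obtain I J where s: "\<sigma> = Inl ` I \<union> Inr ` J" "I \<in> K" "J \<in> alexander_dual m K" "I \<inter> J = {}"
      using sig by (auto simp: bier_mem)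
    have IJ: "I \<subseteq> {1..m}" "J \<subseteq> {1..m}" using sub[OF s(2)] s(3) by (auto simp: alexander_dual_def)
    have gim: "g ` \<sigma> = (\<lambda>i. i - 1) ` (I \<union> J)" unfolding s(1) g_def by (simp add: image_Un image_image)
    have ginj: "inj_on g \<sigma>"
    proof (rule inj_onI)
      fix x y assume x: "x \<in> \<sigma>" and y: "y \<in> \<sigma>" and e: "g x = g y"
      have pos: "\<And>i. i \<in> I \<union> J \<Longrightarrow> 1 \<le> i" using IJ by auto
      from x consider i where "i \<in> I" "x = Inl i" | i where "i \<in> J" "x = Inr i" unfolding s(1) by blast
      then show "x = y"
      proof cases
        case 1
        from y consider i' where "i' \<in> I" "y = Inl i'" | i' where "i' \<in> J" "y = Inr i'" unfolding s(1) by blast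
        then show ?thesis
        proof cases
          case a: 1
          then have "i - 1 = i' - 1" using e 1 by (simp add: g_def)
          then show ?thesis using pos[of i] pos[of i'] a 1 by simp
        next
          case a: 2
          then have "i - 1 = i' - 1" using e 1 by (simp add: g_def)
          then have "i = i'" using pos[of i] pos[of i'] a 1 by simp
          then show ?thesis using s(4) a 1 by blast
        qed
      next
        case 2
        from y consider i' where "i' \<in> I" "y = Inl i'" | i' where "i' \<in> J" "y = Inr i'" unfolding s(1) by blast
        then show ?thesis
        proof cases
          case a: 1
          then have "i - 1 = i' - 1" using e 2 by (simp add: g_def)
          then have "i = i'" using pos[of i] pos[of i'] a 2 by simp
          then show ?thesis using s(4) a 2 by blast
        next
          case a: 2
          then have "i - 1 = i' - 1" using e 2 by (simp add: g_def)
          then show ?thesis using pos[of i] pos[of i'] a 2 by simp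
        qed
      qed
    qed
    have le: "\<And>i. i \<in> I \<union> J \<Longrightarrow> 1 \<le> i \<and> i \<le> m" using IJ by auto
    have gsub: "g ` \<sigma> \<subseteq> {0..m - 1}" unfolding gim
    proof
      fix y assume "y \<in> (\<lambda>i. i - 1) ` (I \<union> J)"
      then obtain i where i: "i \<in> I \<union> J" "y = i - 1" by blast
      then show "y \<in> {0..m - 1}" using le[OF i(1)] by auto
    qed
    have inj: "inj_on \<Lambda> \<sigma>" unfolding \<Lambda>_def
      using comp_inj_on[OF ginj inj_on_subset[OF uvec_inj gsub]] by (simp add: comp_def)
    obtain j where j: "j \<in> {1..m}" "j \<notin> I" "j \<notin> J" using proper[OF s(2-4)] by blast
    have gsub2: "g ` \<sigma> \<subseteq> {0..m - 1} - {j - 1}" unfolding gim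
    proof
      fix y assume "y \<in> (\<lambda>i. i - 1) ` (I \<union> J)"
      then obtain i where i: "i \<in> I \<union> J" "y = i - 1" by blast
      then have "i \<noteq> j" using j by auto
      then have "y \<noteq> j - 1" using i le[OF i(1)] j(1) by auto
      then show "y \<in> {0..m - 1} - {j - 1}" using i le[OF i(1)] by auto
    qed
    have "\<Lambda> ` \<sigma> \<subseteq> uvec (m - 1) ` ({0..m - 1} - {j - 1})"
    proof -
      have "\<Lambda> ` \<sigma> = uvec (m - 1) ` (g ` \<sigma>)" unfolding \<Lambda>_def by (simp add: image_image)
      then show ?thesis using image_mono[OF gsub2] by simp
    qed
    moreover have "Zbasis (m - 1) (uvec (m - 1) ` ({0..m - 1} - {j - 1}))"
      using j by (intro uvec_basis) auto
    ultimately show ?thesis using inj by blast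
  qed
  then show ?thesis by blast
qed

end

lemma sum_mod_cong:
  assumes "\<And>x. x \<in> S \<Longrightarrow> (f x :: int) mod q = g x mod q"
  shows "sum f S mod q = sum g S mod q"
proof -
  have "sum f S mod q = (\<Sum>x\<in>S. f x mod q) mod q" by (simp add: mod_sum_eq)
  also have "\<dots> = (\<Sum>x\<in>S. g x mod q) mod q" using assms by (simp cong: sum.cong)
  also have "\<dots> = sum g S mod q" by (simp add: mod_sum_eq)
  finally show ?thesis .
qed

lemma Z_to_p:
  assumes p: "prime p" and H: "\<forall>\<sigma>\<in>L. inj_on \<Lambda> \<sigma> \<and> (\<exists>B. Zbasis k B \<and> \<Lambda> ` \<sigma> \<subseteq> B)"
  shows "\<exists>\<Lambda>p. \<forall>\<sigma>\<in>L. inj_on \<Lambda>p \<sigma> \<and> \<Lambda>p ` \<sigma> \<subseteq> Zpvec p k \<and> lin_indep_mod p (\<Lambda>p ` \<sigma>)"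
proof -
  have p1: "p > 1" using p prime_gt_1_nat by blast
  define red where "red = (\<lambda>(x::nat\<Rightarrow>int) i. x i mod int p)"
  have "inj_on (red \<circ> \<Lambda>) \<sigma> \<and> (red \<circ> \<Lambda>) ` \<sigma> \<subseteq> Zpvec p k \<and> lin_indep_mod p ((red \<circ> \<Lambda>) ` \<sigma>)"
    if \<sigma>: "\<sigma> \<in> L" for \<sigma>
  proof -
    obtain B where B: "Zbasis k B" "\<Lambda> ` \<sigma> \<subseteq> B" and inj: "inj_on \<Lambda> \<sigma>" using H \<sigma> by blast
    define S where "S = \<Lambda> ` \<sigma>"
    have SB: "S \<subseteq> B" using B by (simp add: S_def)
    have finB: "finite B" and BZ: "B \<subseteq> Zvec k" using B by (auto simp: Zbasis_def)
    have finS: "finite S" using finite_subset[OF SB finB] .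
    have rinjB: "inj_on red B" unfolding red_def using zbasis_red_inj[OF B(1) p1] .
    have rinj: "inj_on red S" using inj_on_subset[OF rinjB SB] .
    have im: "(red \<circ> \<Lambda>) ` \<sigma> = red ` S" by (simp add: S_def image_comp)
    have i1: "inj_on (red \<circ> \<Lambda>) \<sigma>" using comp_inj_on[OF inj, of red] rinj by (simp add: S_def)
    have i2: "red ` S \<subseteq> Zpvec p k"
    proof
      fix y assume "y \<in> red ` S"
      then obtain x where x: "x \<in> B" "y = red x" using SB by blast
      then have xz: "\<forall>i\<ge>k. x i = 0" using BZ by (auto simp: Zvec_def)
      have "0 \<le> y i \<and> y i < int p" for i using x(2) p1 by (simp add: red_def)
      moreover have "\<forall>i\<ge>k. y i = 0" using xz x(2) by (simp add: red_def)
      ultimately show "y \<in> Zpvec p k" by (simp add: Zpvec_def)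
    qed
    have i3: "lin_indep_mod p (red ` S)"
      unfolding lin_indep_mod_def
    proof (intro conjI allI impI)
      show "finite (red ` S)" using finS by simp
      fix c assume c: "\<forall>i. (\<Sum>b\<in>red ` S. c b * b i) mod int p = 0"
      define c' where "c' = (\<lambda>x. if x \<in> S then c (red x) else 0)"
      have "(\<Sum>x\<in>B. c' x * x i) mod int p = 0" for i
      proof -
        have "(\<Sum>x\<in>B. c' x * x i) = (\<Sum>x\<in>S. c' x * x i)"
          using finB SB by (intro sum.mono_neutral_right) (simp_all add: c'_def)
        also have "\<dots> = (\<Sum>x\<in>S. c (red x) * x i)" by (rule sum.cong) (simp_all add: c'_def)
        finally have "(\<Sum>x\<in>B. c' x * x i) mod int p = (\<Sum>x\<in>S. c (red x) * x i) mod int p" by simp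
        also have "\<dots> = (\<Sum>x\<in>S. c (red x) * red x i) mod int p"
          by (rule sum_mod_cong) (simp add: red_def mod_mult_right_eq)
        also have "(\<Sum>x\<in>S. c (red x) * red x i) = (\<Sum>b\<in>red ` S. c b * b i)"
          by (simp add: sum.reindex[OF rinj])
        finally show ?thesis using c by simp
      qed
      then have c0: "c' x mod int p = 0" if "x \<in> B" for x using zbasis_mod[OF B(1), of c' p x] that by blast
      have cx: "c (red x) mod int p = 0" if xS: "x \<in> S" for x
      proof -
        have "x \<in> B" using xS SB by blast
        then have "c' x mod int p = 0" by (rule c0)
        then show ?thesis using xS by (simp add: c'_def)
      qed
      show "\<forall>b\<in>red ` S. c b mod int p = 0" using cx by blast
    qed
    show ?thesis using i1 i2 i3 im by simp
  qed
  then show ?thesis by blast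
qed

theorem mainTheorem12:
  fixes m :: nat and K :: "nat set set" and p :: nat
  assumes "m \<ge> 2"
    and "simplicial_complex_on m K"
    and "K \<noteq> Pow {1..m}"
    and "prime p"
  shows "int (buchstaber (bier m K)) = int (buchstaber_mod p (bier m K))
       \<and> int (buchstaber_mod p (bier m K)) = int (fvec K 0) - int (fvec K (m - 2)) + 1"
proof -
  interpret SC m K using assms(1-3) by unfold_locales
  define L where "L = bier m K"
  define n where "n = card (vertices L)"
  define N where "N = n - (m - 1)"
  have nN: "n - N = m - 1" using n_ge unfolding N_def n_def L_def by simp
  define PZ where "PZ = (\<lambda>r. r \<le> card (vertices L) \<and>
     (\<exists>\<Lambda> :: nat + nat \<Rightarrow> (nat \<Rightarrow> int). \<forall>\<sigma>\<in>L. inj_on \<Lambda> \<sigma> \<and>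
        (\<exists>B. Zbasis (card (vertices L) - r) B \<and> \<Lambda> ` \<sigma> \<subseteq> B)))"
  define PP where "PP = (\<lambda>r. r \<le> card (vertices L) \<and>
     (\<exists>\<Lambda> :: nat + nat \<Rightarrow> (nat \<Rightarrow> int). \<forall>\<sigma>\<in>L. inj_on \<Lambda> \<sigma> \<and>
        \<Lambda> ` \<sigma> \<subseteq> Zpvec p (card (vertices L) - r) \<and> lin_indep_mod p (\<Lambda> ` \<sigma>)))"
  have b1: "buchstaber L = (GREATEST r. PZ r)" by (simp add: buchstaber_def PZ_def)
  have b2: "buchstaber_mod p L = (GREATEST r. PP r)" by (simp add: buchstaber_mod_def PP_def)
  have PZN: "PZ N"
  proof -
    have "N \<le> n" by (simp add: N_def)
    moreover have "card (vertices L) - N = m - 1" using nN by (simp add: n_def)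
    ultimately show ?thesis using PZ unfolding PZ_def L_def n_def by simp
  qed
  have ZP: "PP r" if "PZ r" for r
  proof -
    from that obtain \<Lambda> :: "nat + nat \<Rightarrow> (nat \<Rightarrow> int)" where r: "r \<le> card (vertices L)"
      and H: "\<forall>\<sigma>\<in>L. inj_on \<Lambda> \<sigma> \<and> (\<exists>B. Zbasis (card (vertices L) - r) B \<and> \<Lambda> ` \<sigma> \<subseteq> B)"
      unfolding PZ_def by blast
    obtain \<Lambda>p where "\<forall>\<sigma>\<in>L. inj_on \<Lambda>p \<sigma> \<and> \<Lambda>p ` \<sigma> \<subseteq> Zpvec p (card (vertices L) - r) \<and> lin_indep_mod p (\<Lambda>p ` \<sigma>)"
      using Z_to_p[OF assms(4) H] by blast
    then show ?thesis unfolding PP_def using r by blast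
  qed
  have bound: "r \<le> N" if "PP r" for r
  proof -
    from that obtain \<Lambda> :: "nat + nat \<Rightarrow> (nat \<Rightarrow> int)" where r: "r \<le> card (vertices L)"
      and H: "\<forall>\<sigma>\<in>L. inj_on \<Lambda> \<sigma> \<and> \<Lambda> ` \<sigma> \<subseteq> Zpvec p (card (vertices L) - r) \<and> lin_indep_mod p (\<Lambda> ` \<sigma>)"
      unfolding PP_def by blast
    obtain \<sigma> where \<sigma>: "\<sigma> \<in> L" "card \<sigma> = m - 1" using facet unfolding L_def by blast
    have p1: "p > 1" using assms(4) prime_gt_1_nat by blast
    have "card (\<Lambda> ` \<sigma>) \<le> card (vertices L) - r"
      using H \<sigma>(1) by (intro indep_card[OF p1]) auto
    moreover have "card (\<Lambda> ` \<sigma>) = m - 1" using H \<sigma> by (simp add: card_image)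
    ultimately show ?thesis using r unfolding N_def n_def by linarith
  qed
  have g1: "buchstaber L = N" unfolding b1
    by (rule Greatest_equality) (use PZN bound ZP in auto)
  have g2: "buchstaber_mod p L = N" unfolding b2
    by (rule Greatest_equality) (use PZN bound ZP in auto)
  have "int N = int (fvec K 0) - int (fvec K (m - 2)) + 1"
    using count unfolding N_def n_def L_def .
  then show ?thesis using g1 g2 unfolding L_def by simp
qed

end
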